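(* Let $d_1$ be a positive integer, let $p_{10}<p_{11}<\cdots<p_{1d_1}$ and $p_{20}<p_{21}$ be real numbers (so $d_2=1$), and let $$S=\bigl\{(x_1,x_2,\mu)\in\mathbb{R}^2\times\mathbb{R} : \mu=x_1x_2,\ x_1\in\{p_{10},\dots,p_{1d_1}\},\ x_2\in\{p_{20},p_{21}\}\bigr\}.$$ Consider the set $E$ of all $(x_1,x_2,\mu,\boldsymbol{z}_1,z_{21})\in\mathbb{R}^2\times\mathbb{R}\times\{0,1\}^{d_1}\times\{0,1\}$ with $\boldsymbol{z}_1=(z_{11},\dots,z_{1d_1})$ satisfying $x_1=p_{10}+\sum_{j=1}^{d_1}(p_{1j}-p_{1,j-1})z_{1j}$, $1\ge z_{11}\ge z_{12}\ge\cdots\ge z_{1d_1}\ge 0$, $x_2=p_{20}+(p_{21}-p_{20})z_{21}$, $1\ge z_{21}\ge 0$, and the four inequalities \begin{align*} \mu&\le p_{10}p_{20}+p_{10}(p_{21}-p_{20})z_{21}+\textstyle\sum_{j=1}^{d_1}p_{21}(p_{1j}-p_{1,j-1})z_{1j},\\ \mu&\le p_{10}p_{20}+\textstyle\sum_{j=1}^{d_1}p_{20}(p_{1j}-p_{1,j-1})z_{1j}+p_{1d_1}(p_{21}-p_{20})z_{21},\\ \mu&\ge p_{10}p_{21}+p_{10}(p_{20}-p_{21})(1-z_{21})+\textstyle\sum_{j=1}^{d_1}p_{20}(p_{1j}-p_{1,j-1})z_{1j},\\ \mu&\ge p_{10}p_{21}+\textstyle\sum_{j=1}^{d_1}p_{21}(p_{1j}-p_{1,j-1})z_{1j}+p_{1d_1}(p_{20}-p_{21})(1-z_{21}).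 \end{align*} Then $E$ is an MIP formulation of $S$, i.e., the projection of $E$ onto the $(x_1,x_2,\mu)$ variables equals $S$.
   Context: An MIP formulation of a set $S\subseteq\mathbb{R}^k$ is a set of the form $E=\{(\boldsymbol{x},\boldsymbol{y},\boldsymbol{z})\in Q:\boldsymbol{z}\in\{0,1\}^q\}$, with $Q$ a polyhedron, whose projection onto the $\boldsymbol{x}$-variables equals $S$. *)

theory Defs
  imports Complex_Main
begin

text \<open>Points are tuples (x1, x2, mu, z1, z21); z1 is the vector (z1 1, ..., z1 d1),
  represented as a function nat => real (values outside 1..d1 are irrelevant).
  p1 j is p_{1j} for j = 0..d1.\<close>

definition S_set :: "nat \<Rightarrow> (nat \<Rightarrow> real) \<Rightarrow> real \<Rightarrow> real \<Rightarrow> (real \<times> real \<times> real) set" where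
  "S_set d1 p1 p20 p21 =
     {(x1, x2, mu). mu = x1 * x2 \<and> x1 \<in> p1 ` {0..d1} \<and> x2 \<in> {p20, p21}}"

definition Q_set :: "nat \<Rightarrow> (nat \<Rightarrow> real) \<Rightarrow> real \<Rightarrow> real
    \<Rightarrow> (real \<times> real \<times> real \<times> (nat \<Rightarrow> real) \<times> real) set" where
  "Q_set d1 p1 p20 p21 =
     {(x1, x2, mu, z1, z21).
        x1 = p1 0 + (\<Sum>j=1..d1. (p1 j - p1 (j - 1)) * z1 j)
      \<and> z1 1 \<le> 1 \<and> (\<forall>j\<in>{1..<d1}. z1 (j + 1) \<le> z1 j) \<and> z1 d1 \<ge> 0
      \<and> x2 = p20 + (p21 - p20) * z21
      \<and> z21 \<le> 1 \<and> z21 \<ge> 0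
      \<and> mu \<le> p1 0 * p20 + p1 0 * (p21 - p20) * z21
              + (\<Sum>j=1..d1. p21 * (p1 j - p1 (j - 1)) * z1 j)
      \<and> mu \<le> p1 0 * p20 + (\<Sum>j=1..d1. p20 * (p1 j - p1 (j - 1)) * z1 j)
              + p1 d1 * (p21 - p20) * z21
      \<and> mu \<ge> p1 0 * p21 + p1 0 * (p20 - p21) * (1 - z21)
              + (\<Sum>j=1..d1. p20 * (p1 j - p1 (j - 1)) * z1 j)
      \<and> mu \<ge> p1 0 * p21 + (\<Sum>j=1..d1. p21 * (p1 j - p1 (j - 1)) * z1 j)
              + p1 d1 * (p20 - p21) * (1 - z21)}"

definition E_set :: "nat \<Rightarrow> (nat \<Rightarrow> real) \<Rightarrow> real \<Rightarrow> real
    \<Rightarrow> (real \<times> real \<times> real \<times> (nat \<Rightarrow> real) \<times> real) set" where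
  "E_set d1 p1 p20 p21 =
     {(x1, x2, mu, z1, z21) \<in> Q_set d1 p1 p20 p21.
        (\<forall>j\<in>{1..d1}. z1 j \<in> {0, 1}) \<and> z21 \<in> {0, 1}}"

definition proj_x :: "(real \<times> real \<times> real \<times> (nat \<Rightarrow> real) \<times> real) \<Rightarrow> real \<times> real \<times> real" where
  "proj_x v = (case v of (x1, x2, mu, z1, z21) \<Rightarrow> (x1, x2, mu))"

end

theory Submission
  imports Defs
begin

lemma chain_le:
  assumes "\<forall>j\<in>{1..<d}. z (j + 1) \<le> (z j::real)" "1 \<le> (i::nat)" "i \<le> j" "j \<le> d"
  shows "z j \<le> z i"
  using assms(3,4)
proof (induction j rule: dec_induct)
  case base then show ?case by simp
next
  case (step n)
  then have "z (n+1) \<le> z n" using assms(1,2) by auto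
  then show ?case using step by simp
qed

lemma p_mono:
  assumes "\<And>j. j < d \<Longrightarrow> p j < (p (j + 1)::real)" "(i::nat) \<le> j" "j \<le> d"
  shows "p i \<le> p j"
  using assms(2,3)
proof (induction j rule: dec_induct)
  case base then show ?case by simp
next
  case (step n)
  then have "p n < p (n+1)" using assms(1) by auto
  then show ?case using step by simp
qed

lemma tele: "(\<Sum>j=1..(k::nat). p j - p (j - 1)) = p k - (p 0::real)"
  by (induction k) auto

lemma tele2:
  assumes "k \<le> (d::nat)"
  shows "(\<Sum>j=1..d. c * (p j - p (j - 1)) * (if j \<le> k then 1 else 0)) = c * (p k - (p 0::real))"
proof -
  have "(\<Sum>j=1..d. c * (p j - p (j - 1)) * (if j \<le> k then 1 else 0))
      = (\<Sum>j\<in>{j\<in>{1..d}. j \<le> k}. c * (p j - p (j - 1)))"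
    by (subst sum.inter_filter) (auto intro: sum.cong)
  also have "{j\<in>{1..d}. j \<le> k} = {1..k}" using assms by auto
  also have "(\<Sum>j=1..k. c * (p j - p (j - 1))) = c * (p k - p 0)"
    by (metis sum_distrib_left tele)
  finally show ?thesis .
qed

lemma binary_rep:
  assumes "\<forall>j\<in>{1..<(d::nat)}. z (j + 1) \<le> (z j::real)" "\<forall>j\<in>{1..d}. z j \<in> {0, 1}"
  shows "\<exists>k\<le>d. \<forall>j\<in>{1..d}. z j = (if j \<le> k then 1 else 0)"
proof -
  define K where "K = {0} \<union> {j\<in>{1..d}. z j = 1}"
  define k where "k = Max K"
  have fin: "finite K" unfolding K_def by auto
  have ne: "K \<noteq> {}" unfolding K_def by auto
  have kK: "k \<in> K" unfolding k_def using fin ne by (rule Max_in)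
  have kd: "k \<le> d" using kK unfolding K_def by auto
  have "z j = (if j \<le> k then 1 else 0)" if j: "j \<in> {1..d}" for j
  proof (cases "j \<le> k")
    case True
    then have "k \<ge> 1" using j by auto
    then have zk: "z k = 1" using kK unfolding K_def by auto
    have "z k \<le> z j" using chain_le[OF assms(1), of j k] True j kd by auto
    moreover have "z j \<in> {0,1}" using assms(2) j by blast
    ultimately show ?thesis using True zk by auto
  next
    case False
    have "z j \<noteq> 1"
    proof
      assume "z j = 1"
      then have "j \<in> K" using j unfolding K_def by auto
      then have "j \<le> k" unfolding k_def using fin by simp
      then show False using False by simp
    qed
    then show ?thesis using False assms(2) j by auto
  qed
  then show ?thesis using kd by blast
qed

theorem proposition1:
  fixes d1 :: nat and p1 :: "nat \<Rightarrow> real" and p20 p21 :: real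
  assumes "d1 \<ge> 1"
    and "\<And>j. j < d1 \<Longrightarrow> p1 j < p1 (j + 1)"
    and "p20 < p21"
  shows "proj_x ` E_set d1 p1 p20 p21 = S_set d1 p1 p20 p21"
proof
  show "proj_x ` E_set d1 p1 p20 p21 \<subseteq> S_set d1 p1 p20 p21"
  proof
    fix v assume "v \<in> proj_x ` E_set d1 p1 p20 p21"
    then obtain x1 x2 mu z1 z21 where v: "v = (x1, x2, mu)"
      and E: "(x1, x2, mu, z1, z21) \<in> E_set d1 p1 p20 p21"
      unfolding proj_x_def by auto
    from E have Q: "(x1, x2, mu, z1, z21) \<in> Q_set d1 p1 p20 p21"
      and bin: "\<forall>j\<in>{1..d1}. z1 j \<in> {0, 1}" and z21: "z21 \<in> {0,1}"
      unfolding E_set_def by auto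
    from Q have ch: "\<forall>j\<in>{1..<d1}. z1 (j + 1) \<le> z1 j" unfolding Q_set_def by auto
    obtain k where kd: "k \<le> d1" and zr: "\<forall>j\<in>{1..d1}. z1 j = (if j \<le> k then 1 else 0)"
      using binary_rep[OF ch bin] by blast
    have sums: "\<And>c. (\<Sum>j=1..d1. c * (p1 j - p1 (j - 1)) * z1 j) = c * (p1 k - p1 0)"
    proof -
      fix c
      have "(\<Sum>j=1..d1. c * (p1 j - p1 (j - 1)) * z1 j)
         = (\<Sum>j=1..d1. c * (p1 j - p1 (j - 1)) * (if j \<le> k then 1 else 0))"
        using zr by (intro sum.cong) auto
      then show "(\<Sum>j=1..d1. c * (p1 j - p1 (j - 1)) * z1 j) = c * (p1 k - p1 0)"
        using tele2[OF kd] by simp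
    qed
    have s1: "(\<Sum>j=1..d1. (p1 j - p1 (j - 1)) * z1 j) = p1 k - p1 0"
      using sums[of 1] by simp
    have x1: "x1 = p1 k" using Q s1 unfolding Q_set_def by auto
    have Q2: "x2 = p20 + (p21 - p20) * z21
      \<and> mu \<le> p1 0 * p20 + p1 0 * (p21 - p20) * z21 + p21 * (p1 k - p1 0)
      \<and> mu \<le> p1 0 * p20 + p20 * (p1 k - p1 0) + p1 d1 * (p21 - p20) * z21
      \<and> mu \<ge> p1 0 * p21 + p1 0 * (p20 - p21) * (1 - z21) + p20 * (p1 k - p1 0)
      \<and> mu \<ge> p1 0 * p21 + p21 * (p1 k - p1 0) + p1 d1 * (p20 - p21) * (1 - z21)"
      using Q unfolding Q_set_def by (simp only: mem_Collect_eq case_prod_conv sums)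
    have "mu = x1 * x2 \<and> x2 \<in> {p20, p21}"
    proof (cases "z21 = 0")
      case True
      then show ?thesis using Q2 x1 by (auto simp: algebra_simps)
    next
      case False
      then have "z21 = 1" using z21 by auto
      then show ?thesis using Q2 x1 by (auto simp: algebra_simps)
    qed
    then show "v \<in> S_set d1 p1 p20 p21" using v x1 kd unfolding S_set_def by auto
  qed
next
  show "S_set d1 p1 p20 p21 \<subseteq> proj_x ` E_set d1 p1 p20 p21"
  proof
    fix v assume "v \<in> S_set d1 p1 p20 p21"
    then obtain k x2 where kd: "k \<le> d1" and x2: "x2 \<in> {p20, p21}"
      and v: "v = (p1 k, x2, p1 k * x2)"
      unfolding S_set_def by auto
    define z1 where "z1 = (\<lambda>j::nat. if j \<le> k then (1::real) else 0)"
    define z21 where "z21 = (if x2 = p20 then (0::real) else 1)"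
    have sums: "\<And>c. (\<Sum>j=1..d1. c * (p1 j - p1 (j - 1)) * z1 j) = c * (p1 k - p1 0)"
      unfolding z1_def using tele2[OF kd] by simp
    have s1: "(\<Sum>j=1..d1. (p1 j - p1 (j - 1)) * z1 j) = p1 k - p1 0"
      using sums[of 1] by simp
    have m0: "p1 0 \<le> p1 k" by (rule p_mono[where d=d1]) (use assms(2) kd in auto)
    have md: "p1 k \<le> p1 d1" by (rule p_mono[where d=d1]) (use assms(2) kd in auto)
    have a: "0 \<le> (p21 - p20) * (p1 k - p1 0)" using m0 assms(3) by simp
    have b: "0 \<le> (p21 - p20) * (p1 d1 - p1 k)" using md assms(3) by simp
    have "(p1 k, x2, p1 k * x2, z1, z21) \<in> Q_set d1 p1 p20 p21"
      unfolding Q_set_def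
      apply (simp only: mem_Collect_eq case_prod_conv sums s1)
      using x2 a b assms(3) kd
      by (auto simp: z1_def z21_def algebra_simps)
    moreover have "(\<forall>j\<in>{1..d1}. z1 j \<in> {0, 1}) \<and> z21 \<in> {0, 1}"
      unfolding z1_def z21_def by auto
    ultimately have "(p1 k, x2, p1 k * x2, z1, z21) \<in> E_set d1 p1 p20 p21"
      unfolding E_set_def by auto
    then show "v \<in> proj_x ` E_set d1 p1 p20 p21"
      using v by (force simp: proj_x_def)
  qed
qed

end
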